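(* Let $\mathrm{FOV}_{\min}\in(0,\pi/2]$, $L_{\max}>0$, $A_{\max}>0$. The constrained problem of maximising $R(B,\mathrm{FOV})$ over $B>0$, $\mathrm{FOV}\in(0,\pi/2]$ subject to $\mathrm{FOV}\ge\mathrm{FOV}_{\min}$, $L_{\mathrm{ADR}}(B,\mathrm{FOV})\le L_{\max}$ and $A_{\mathrm{ADR}}(B,\mathrm{FOV})\le A_{\max}$ is equivalent to the single-variable problem of maximising $B\mapsto R(B,f_{\mathrm{FOV}}(B))$ over $\{B>0: f_{\mathrm{FOV}}(B)\le\pi/2\}$: the two suprema coincide, and $(B^*,\mathrm{FOV}^* )$ is a maximiser of the constrained problem if and only if $\mathrm{FOV}^*=f_{\mathrm{FOV}}(B^* )$ and $B^*$ maximises $R(B,f_{\mathrm{FOV}}(B))$ over that set.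
   Context: Fix constants: an integer $N_{\mathrm{tier}}\ge1$; an integer $N_{\mathrm{PD}}\ge 1$; $\mathrm{FF}\in(0,1]$; $K_{\mathrm{PD}}>0$; $n_{\mathrm{CPC}}\ge 1$; $P_{\mathrm t}>0$; $w>0$; $R_{\mathrm{PD}}>0$; $\Gamma>0$; $N_0>0$. The design variables are $B>0$ and $\mathrm{FOV}\in(0,\pi/2]$. Write $\theta=\theta_{\mathrm{CPC}}=\mathrm{FOV}/(2N_{\mathrm{tier}}+1)$. Define $D_2(B)=\frac{1}{K_{\mathrm{PD}}B}\sqrt{N_{\mathrm{PD}}/\mathrm{FF}}$, $D_1(B,\mathrm{FOV})=D_2(B)\,\frac{n_{\mathrm{CPC}}}{\sin\theta}$, $P_{\mathrm r}(B,\mathrm{FOV})=\mathrm{FF}\,P_{\mathrm t}\Big(1-\exp\Big(-\frac{D_1(B,\mathrm{FOV})^2}{2w^2}\Big)\Big)$, and the achievable rate $R(B,\mathrm{FOV})=B\log_2\Big(1+\frac{(R_{\mathrm{PD}}P_{\mathrm r}(B,\mathrm{FOV}))^2}{\Gamma N_0 B}\Big)$. Set $K_1=\frac{1}{2K_{\mathrm{PD}}}\sqrt{N_{\mathrm{PD}}/\mathrm{FF}}$ and $K_2=\frac{\pi N_{\mathrm{PD}}n_{\mathrm{CPC}}^2}{4\,\mathrm{FF}\,K_{\mathrm{PD}}^2}$, and define $L_{\mathrm{ADR}}(B,\mathrm{FOV})=\frac{K_1}{B}\cdot\frac{n_{\mathrm{CPC}}+\sin\theta}{\sin\theta\,\tan\theta}$,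 $A_{\mathrm{ADR}}(B,\mathrm{FOV})=\frac{K_2}{B^2\sin^2\theta}\Big(1+\sum_{i=1}^{N_{\mathrm{tier}}}6i\cos(2i\theta)\Big)$. Given $L_{\max},A_{\max}>0$, define for $\mathrm{FOV}\in(0,\pi/2]$ the boundary functions $f_{\mathrm L}(\mathrm{FOV})=\frac{K_1}{L_{\max}}\cdot\frac{n_{\mathrm{CPC}}+\sin\theta}{\sin\theta\tan\theta}$ and $f_{\mathrm A}(\mathrm{FOV})=\frac{1}{\sin\theta}\sqrt{\frac{K_2}{A_{\max}}\Big(1+\sum_{i=1}^{N_{\mathrm{tier}}}6i\cos(2i\theta)\Big)}$, their (generalised) inverses $f_{\mathrm L}^{-1}(B)=\inf\{\mathrm{FOV}\in(0,\pi/2]: f_{\mathrm L}(\mathrm{FOV})\le B\}$ and $f_{\mathrm A}^{-1}(B)=\inf\{\mathrm{FOV}\in(0,\pi/2]: f_{\mathrm A}(\mathrm{FOV})\le B\}$ (with $\inf\emptyset=+\infty$), and $f_{\mathrm{FOV}}(B)=\max\{\mathrm{FOV}_{\min},\,f_{\mathrm L}^{-1}(B),\,f_{\mathrm A}^{-1}(B)\}$. *)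

theory Defs
  imports "HOL-Analysis.Analysis"
begin

text \<open>Parameters: Nt = N_tier, Npd = N_PD, FF, Kpd = K_PD, n = n_CPC, Pt = P_t, w,
  Rpd = R_PD, Gam = Gamma, N0.\<close>

definition theta :: "nat \<Rightarrow> real \<Rightarrow> real" where
  "theta Nt FOV = FOV / (2 * real Nt + 1)"

definition D2 :: "nat \<Rightarrow> real \<Rightarrow> real \<Rightarrow> real \<Rightarrow> real" where
  "D2 Npd FF Kpd B = 1 / (Kpd * B) * sqrt (real Npd / FF)"

definition D1 :: "nat \<Rightarrow> nat \<Rightarrow> real \<Rightarrow> real \<Rightarrow> real \<Rightarrow> real \<Rightarrow> real \<Rightarrow> real" where
  "D1 Nt Npd FF Kpd n B FOV = D2 Npd FF Kpd B * (n / sin (theta Nt FOV))"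

definition Pr :: "nat \<Rightarrow> nat \<Rightarrow> real \<Rightarrow> real \<Rightarrow> real \<Rightarrow> real \<Rightarrow> real \<Rightarrow> real \<Rightarrow> real \<Rightarrow> real" where
  "Pr Nt Npd FF Kpd n Pt w B FOV =
     FF * Pt * (1 - exp (- ((D1 Nt Npd FF Kpd n B FOV)^2 / (2 * w^2))))"

definition rate :: "nat \<Rightarrow> nat \<Rightarrow> real \<Rightarrow> real \<Rightarrow> real \<Rightarrow> real \<Rightarrow> real \<Rightarrow> real \<Rightarrow> real \<Rightarrow> real
                     \<Rightarrow> real \<Rightarrow> real \<Rightarrow> real" where
  "rate Nt Npd FF Kpd n Pt w Rpd Gam N0 B FOV =
     B * log 2 (1 + (Rpd * Pr Nt Npd FF Kpd n Pt w B FOV)^2 / (Gam * N0 * B))"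

definition K1 :: "nat \<Rightarrow> real \<Rightarrow> real \<Rightarrow> real" where
  "K1 Npd FF Kpd = 1 / (2 * Kpd) * sqrt (real Npd / FF)"

definition K2 :: "nat \<Rightarrow> real \<Rightarrow> real \<Rightarrow> real \<Rightarrow> real" where
  "K2 Npd FF Kpd n = pi * real Npd * n^2 / (4 * FF * Kpd^2)"

definition tier_sum :: "nat \<Rightarrow> real \<Rightarrow> real" where
  "tier_sum Nt th = 1 + (\<Sum>i = 1..Nt. 6 * real i * cos (2 * real i * th))"

definition L_ADR :: "nat \<Rightarrow> nat \<Rightarrow> real \<Rightarrow> real \<Rightarrow> real \<Rightarrow> real \<Rightarrow> real \<Rightarrow> real" where
  "L_ADR Nt Npd FF Kpd n B FOV =
     K1 Npd FF Kpd / B * ((n + sin (theta Nt FOV)) / (sin (theta Nt FOV) * tan (theta Nt FOV)))"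

definition A_ADR :: "nat \<Rightarrow> nat \<Rightarrow> real \<Rightarrow> real \<Rightarrow> real \<Rightarrow> real \<Rightarrow> real \<Rightarrow> real" where
  "A_ADR Nt Npd FF Kpd n B FOV =
     K2 Npd FF Kpd n / (B^2 * (sin (theta Nt FOV))^2) * tier_sum Nt (theta Nt FOV)"

definition fL :: "nat \<Rightarrow> nat \<Rightarrow> real \<Rightarrow> real \<Rightarrow> real \<Rightarrow> real \<Rightarrow> real \<Rightarrow> real" where
  "fL Nt Npd FF Kpd n Lmax FOV =
     K1 Npd FF Kpd / Lmax * ((n + sin (theta Nt FOV)) / (sin (theta Nt FOV) * tan (theta Nt FOV)))"

definition fA :: "nat \<Rightarrow> nat \<Rightarrow> real \<Rightarrow> real \<Rightarrow> real \<Rightarrow> real \<Rightarrow> real \<Rightarrow> real" where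
  "fA Nt Npd FF Kpd n Amax FOV =
     1 / sin (theta Nt FOV) * sqrt (K2 Npd FF Kpd n / Amax * tier_sum Nt (theta Nt FOV))"

text \<open>Generalised inverse: inf {FOV in (0, pi/2]. f FOV <= B}, with inf of the empty set = +infinity.\<close>
definition gen_inv :: "(real \<Rightarrow> real) \<Rightarrow> real \<Rightarrow> ereal" where
  "gen_inv f B = (INF F \<in> {F. 0 < F \<and> F \<le> pi / 2 \<and> f F \<le> B}. ereal F)"

definition fFOV :: "nat \<Rightarrow> nat \<Rightarrow> real \<Rightarrow> real \<Rightarrow> real \<Rightarrow> real \<Rightarrow> real \<Rightarrow> real \<Rightarrow> real \<Rightarrow> ereal" where
  "fFOV Nt Npd FF Kpd n FOVmin Lmax Amax B =
     max (ereal FOVmin) (max (gen_inv (fL Nt Npd FF Kpd n Lmax) B) (gen_inv (fA Nt Npd FF Kpd n Amax) B))"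

end

theory Submission
  imports Defs
begin


lemma theta_facts:
  assumes "1 \<le> Nt" "0 < F" "F \<le> pi/2"
  shows "0 < theta Nt F" "theta Nt F \<le> F / 3" "theta Nt F < pi/2"
    "\<And>i. i \<le> Nt \<Longrightarrow> 2 * real i * theta Nt F < pi/2"
proof -
  have d: "3 \<le> 2 * real Nt + 1" using assms by simp
  show "0 < theta Nt F" unfolding theta_def using assms by simp
  show t3: "theta Nt F \<le> F / 3" unfolding theta_def using assms d
    by (intro divide_left_mono) auto
  show "theta Nt F < pi/2" using t3 assms pi_gt_zero by linarith
  fix i assume "i \<le> Nt"
  hence "2 * real i * theta Nt F \<le> 2 * real Nt * F / (2 * real Nt + 1)"
    unfolding theta_def using assms by (simp add: divide_right_mono mult_right_mono)
  also have "\<dots> < F" using assms by (simp add: field_simps)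
  finally show "2 * real i * theta Nt F < pi/2" using assms by simp
qed

lemma theta_mono: "x \<le> y \<Longrightarrow> theta Nt x \<le> theta Nt y"
  unfolding theta_def by (simp add: divide_right_mono)
lemma theta_strict: "x < y \<Longrightarrow> theta Nt x < theta Nt y"
  unfolding theta_def by (simp add: divide_strict_right_mono)

lemma gen_inv_le_iff:
  assumes anti: "\<And>x y. 0 < x \<Longrightarrow> x \<le> y \<Longrightarrow> y \<le> pi/2 \<Longrightarrow> f y \<le> f x"
    and cont: "continuous_on {0<..pi/2} f" and F: "0 < F" "F \<le> pi/2"
  shows "gen_inv f B \<le> ereal F \<longleftrightarrow> f F \<le> B"
proof
  assume "f F \<le> B" then show "gen_inv f B \<le> ereal F" unfolding gen_inv_def using F
    by (intro INF_lower) auto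
next
  assume le: "gen_inv f B \<le> ereal F"
  show "f F \<le> B"
  proof (rule ccontr)
    assume "\<not> f F \<le> B" then have gt: "f F - B > 0" by simp
    from cont F obtain d where d: "d > 0"
      "\<forall>x'\<in>{0<..pi/2}. dist x' F < d \<longrightarrow> dist (f x') (f F) < f F - B"
      unfolding continuous_on_iff by (metis gt greaterThanAtMost_iff)
    have "ereal (F + d) \<le> gen_inv f B" unfolding gen_inv_def
    proof (rule INF_greatest)
      fix x assume x: "x \<in> {F. 0 < F \<and> F \<le> pi / 2 \<and> f F \<le> B}"
      show "ereal (F + d) \<le> ereal x"
      proof (rule ccontr)
        assume "\<not> ?thesis" hence xl: "x < F + d" by simp
        show False
        proof (cases "x \<le> F")
          case True then show False using anti[of x F] x F gt by auto
        next
          case False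
          hence "dist x F < d" using xl by (simp add: dist_real_def)
          hence "dist (f x) (f F) < f F - B" using d x by auto
          then show False using x by (auto simp add: dist_real_def abs_less_iff)
        qed
      qed
    qed
    with le d show False by (metis ereal_less_eq(3) less_add_same_cancel1 not_le order_trans)
  qed
qed



lemma sin_theta_pos: "1 \<le> Nt \<Longrightarrow> 0 < F \<Longrightarrow> F \<le> pi/2 \<Longrightarrow> 0 < sin (theta Nt F)"
  using theta_facts[of Nt F] by (intro sin_gt_zero2) auto
lemma tan_theta_pos: "1 \<le> Nt \<Longrightarrow> 0 < F \<Longrightarrow> F \<le> pi/2 \<Longrightarrow> 0 < tan (theta Nt F)"
  using theta_facts[of Nt F] by (intro tan_gt_zero) auto
lemma cos_theta_pos: "1 \<le> Nt \<Longrightarrow> 0 < F \<Longrightarrow> F \<le> pi/2 \<Longrightarrow> 0 < cos (theta Nt F)"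
  using theta_facts[of Nt F] by (intro cos_gt_zero) auto

lemma sin_theta_mono: assumes "1 \<le> Nt" "0 < x" "x \<le> y" "y \<le> pi/2"
  shows "sin (theta Nt x) \<le> sin (theta Nt y)"
  using theta_facts[of Nt x] theta_facts[of Nt y] theta_mono[of x y Nt] assms
  by (intro sin_monotone_2pi_le) auto
lemma sin_theta_strict: assumes "1 \<le> Nt" "0 < x" "x < y" "y \<le> pi/2"
  shows "sin (theta Nt x) < sin (theta Nt y)"
  using theta_facts[of Nt x] theta_facts[of Nt y] theta_strict[of x y Nt] assms
  by (intro sin_monotone_2pi) auto
lemma tan_theta_mono: assumes "1 \<le> Nt" "0 < x" "x \<le> y" "y \<le> pi/2"
  shows "tan (theta Nt x) \<le> tan (theta Nt y)"
  using theta_facts[of Nt x] theta_facts[of Nt y] theta_mono[of x y Nt] assms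
  by (intro tan_mono_le) auto

lemma tier_sum_nonneg: assumes "1 \<le> Nt" "0 < F" "F \<le> pi/2"
  shows "0 \<le> tier_sum Nt (theta Nt F)"
proof -
  have "0 \<le> (\<Sum>i = 1..Nt. 6 * real i * cos (2 * real i * theta Nt F))"
  proof (intro sum_nonneg)
    fix i assume "i \<in> {1..Nt}"
    hence "2 * real i * theta Nt F < pi/2" "0 \<le> 2 * real i * theta Nt F"
      using theta_facts[OF assms] by auto
    hence "0 \<le> cos (2 * real i * theta Nt F)" by (intro cos_ge_zero) auto
    thus "0 \<le> 6 * real i * cos (2 * real i * theta Nt F)" by simp
  qed
  thus ?thesis unfolding tier_sum_def by simp
qed

lemma tier_sum_anti: assumes "1 \<le> Nt" "0 < x" "x \<le> y" "y \<le> pi/2"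
  shows "tier_sum Nt (theta Nt y) \<le> tier_sum Nt (theta Nt x)"
proof -
  have "(\<Sum>i = 1..Nt. 6 * real i * cos (2 * real i * theta Nt y))
     \<le> (\<Sum>i = 1..Nt. 6 * real i * cos (2 * real i * theta Nt x))"
  proof (intro sum_mono)
    fix i assume i: "i \<in> {1..Nt}"
    have "2 * real i * theta Nt y < pi/2" "0 \<le> 2 * real i * theta Nt x"
      using theta_facts[of Nt y] theta_facts[of Nt x] assms i by auto
    moreover have "2 * real i * theta Nt x \<le> 2 * real i * theta Nt y"
      using theta_mono[OF assms(3), of Nt] by (intro mult_left_mono) auto
    ultimately have "cos (2 * real i * theta Nt y) \<le> cos (2 * real i * theta Nt x)"
      by (intro cos_monotone_0_pi_le) auto
    thus "6 * real i * cos (2 * real i * theta Nt y) \<le> 6 * real i * cos (2 * real i * theta Nt x)"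
      by (intro mult_left_mono) auto
  qed
  thus ?thesis unfolding tier_sum_def by simp
qed

lemma K1_nonneg: "0 < FF \<Longrightarrow> 0 < Kpd \<Longrightarrow> 0 \<le> K1 Npd FF Kpd"
  unfolding K1_def by simp
lemma K2_nonneg: "0 < FF \<Longrightarrow> 0 < Kpd \<Longrightarrow> 0 \<le> K2 Npd FF Kpd n"
  unfolding K2_def by simp

lemma fL_anti: assumes "1 \<le> Nt" "0 < FF" "0 < Kpd" "0 \<le> n" "0 < Lmax"
  shows "\<And>x y. 0 < x \<Longrightarrow> x \<le> y \<Longrightarrow> y \<le> pi/2 \<Longrightarrow> fL Nt Npd FF Kpd n Lmax y \<le> fL Nt Npd FF Kpd n Lmax x"
proof -
  fix x y assume xy: "0 < x" "x \<le> y" "y \<le> pi/2"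
  define sa where "sa = sin (theta Nt x)"
  define sb where "sb = sin (theta Nt y)"
  define ta where "ta = tan (theta Nt x)"
  define tb where "tb = tan (theta Nt y)"
  have p: "0 < sa" "0 < ta" "sa \<le> sb" "ta \<le> tb"
    using sin_theta_pos[of Nt x] tan_theta_pos[of Nt x] sin_theta_mono[of Nt x y] tan_theta_mono[of Nt x y]
      assms xy unfolding sa_def sb_def ta_def tb_def by auto
  have e: "\<And>s t. 0 < s \<Longrightarrow> 0 < t \<Longrightarrow> (n + s) / (s * t) = n / (s * t) + 1 / t"
    by (simp add: field_simps)
  have st: "sa * ta \<le> sb * tb" using p by (intro mult_mono) auto
  have "n / (sb * tb) \<le> n / (sa * ta)" using p st assms by (intro divide_left_mono) auto
  moreover have "1 / tb \<le> 1 / ta" using p by (intro divide_left_mono) auto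
  ultimately have "(n + sb) / (sb * tb) \<le> (n + sa) / (sa * ta)"
    using e[of sa ta] e[of sb tb] p by auto
  moreover have "0 \<le> K1 Npd FF Kpd / Lmax" using K1_nonneg[OF assms(2,3)] assms by simp
  ultimately show "fL Nt Npd FF Kpd n Lmax y \<le> fL Nt Npd FF Kpd n Lmax x"
    unfolding fL_def sa_def sb_def ta_def tb_def by (intro mult_left_mono) auto
qed

lemma fA_anti: assumes "1 \<le> Nt" "0 < FF" "0 < Kpd" "0 < Amax"
  shows "\<And>x y. 0 < x \<Longrightarrow> x \<le> y \<Longrightarrow> y \<le> pi/2 \<Longrightarrow> fA Nt Npd FF Kpd n Amax y \<le> fA Nt Npd FF Kpd n Amax x"
proof -
  fix x y assume xy: "0 < x" "x \<le> y" "y \<le> pi/2"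
  define c where "c = K2 Npd FF Kpd n / Amax"
  have c: "0 \<le> c" unfolding c_def using K2_nonneg[OF assms(2,3)] assms by simp
  have s: "0 < sin (theta Nt x)" "sin (theta Nt x) \<le> sin (theta Nt y)"
    using sin_theta_pos[of Nt x] sin_theta_mono[of Nt x y] assms xy by auto
  have "1 / sin (theta Nt y) \<le> 1 / sin (theta Nt x)" using s by (intro divide_left_mono) auto
  moreover have "sqrt (c * tier_sum Nt (theta Nt y)) \<le> sqrt (c * tier_sum Nt (theta Nt x))"
    using tier_sum_anti[of Nt x y] assms xy c by (intro real_sqrt_le_mono mult_left_mono) auto
  moreover have "0 \<le> sqrt (c * tier_sum Nt (theta Nt y))"
    using tier_sum_nonneg[of Nt y] c assms xy by simp
  moreover have "0 \<le> 1 / sin (theta Nt x)" using s by simp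
  ultimately show "fA Nt Npd FF Kpd n Amax y \<le> fA Nt Npd FF Kpd n Amax x"
    unfolding fA_def c_def[symmetric] by (intro mult_mono) auto
qed



lemma theta_cont: "continuous_on S (theta Nt)" unfolding theta_def[abs_def]
    by (intro continuous_intros) simp

lemma fL_cont: assumes "1 \<le> Nt"
  shows "continuous_on {0<..pi/2} (fL Nt Npd FF Kpd n Lmax)"
proof -
  have c1: "\<forall>x\<in>{0<..pi/2}. cos (theta Nt x) \<noteq> 0"
    using cos_theta_pos[OF assms] by (metis greaterThanAtMost_iff order_less_irrefl)
  have c2: "\<forall>x\<in>{0<..pi/2}. sin (theta Nt x) * tan (theta Nt x) \<noteq> 0"
    using sin_theta_pos[OF assms] tan_theta_pos[OF assms]
    by (metis greaterThanAtMost_iff mult_pos_pos order_less_irrefl)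
  have "continuous_on {0<..pi/2} (\<lambda>F. K1 Npd FF Kpd / Lmax * ((n + sin (theta Nt F)) /
      (sin (theta Nt F) * tan (theta Nt F))))"
    by (intro continuous_intros theta_cont c1 c2)
  thus ?thesis unfolding fL_def by simp
qed

lemma fA_cont: assumes "1 \<le> Nt"
  shows "continuous_on {0<..pi/2} (fA Nt Npd FF Kpd n Amax)"
proof -
  have c2: "\<forall>x\<in>{0<..pi/2}. sin (theta Nt x) \<noteq> 0"
    using sin_theta_pos[OF assms]
    by (metis greaterThanAtMost_iff order_less_irrefl)
  have ts: "continuous_on {0<..pi/2} (\<lambda>F. tier_sum Nt (theta Nt F))"
    unfolding tier_sum_def by (intro continuous_intros theta_cont)
  have "continuous_on {0<..pi/2} (\<lambda>F. 1 / sin (theta Nt F) *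
     sqrt (K2 Npd FF Kpd n / Amax * tier_sum Nt (theta Nt F)))"
    by (intro continuous_intros theta_cont c2 ts)
  thus ?thesis unfolding fA_def by simp
qed



lemma L_iff: assumes "0 < B" "0 < Lmax"
  shows "L_ADR Nt Npd FF Kpd n B F \<le> Lmax \<longleftrightarrow> fL Nt Npd FF Kpd n Lmax F \<le> B"
proof -
  define X where "X = K1 Npd FF Kpd * ((n + sin (theta Nt F)) / (sin (theta Nt F) * tan (theta Nt F)))"
  have "L_ADR Nt Npd FF Kpd n B F = X / B" unfolding L_ADR_def X_def by simp
  moreover have "fL Nt Npd FF Kpd n Lmax F = X / Lmax" unfolding fL_def X_def by simp
  ultimately show ?thesis using assms by (simp add: pos_divide_le_eq mult.commute)
qed

lemma A_iff: assumes "0 < B" "0 < Amax" "1 \<le> Nt" "0 < F" "F \<le> pi/2" "0 < FF" "0 < Kpd"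
  shows "A_ADR Nt Npd FF Kpd n B F \<le> Amax \<longleftrightarrow> fA Nt Npd FF Kpd n Amax F \<le> B"
proof -
  define s where "s = sin (theta Nt F)"
  define y where "y = K2 Npd FF Kpd n * tier_sum Nt (theta Nt F)"
  have s: "0 < s" unfolding s_def using sin_theta_pos assms by auto
  have y: "0 \<le> y" unfolding y_def using K2_nonneg tier_sum_nonneg assms by auto
  have "A_ADR Nt Npd FF Kpd n B F = y / (B * s)^2" unfolding A_ADR_def y_def s_def
    by (simp add: power_mult_distrib)
  moreover have "fA Nt Npd FF Kpd n Amax F = sqrt (y / Amax) / s" unfolding fA_def y_def s_def
    by simp
  moreover have "y / (B * s)^2 \<le> Amax \<longleftrightarrow> y / Amax \<le> (B * s)^2"
    using assms s by (simp add: pos_divide_le_eq mult.commute)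
  moreover have "y / Amax \<le> (B * s)^2 \<longleftrightarrow> sqrt (y / Amax) \<le> B * s"
    using assms s y by (metis abs_of_pos mult_pos_pos real_sqrt_abs real_sqrt_le_iff)
  moreover have "sqrt (y / Amax) \<le> B * s \<longleftrightarrow> sqrt (y / Amax) / s \<le> B"
    using s by (simp add: pos_divide_le_eq)
  ultimately show ?thesis by simp
qed

lemma rate_strict:
  assumes "1 \<le> Nt" "1 \<le> Npd" "0 < FF" "0 < Kpd" "1 \<le> n" "0 < Pt" "0 < w" "0 < Rpd" "0 < Gam" "0 < N0"
    and "0 < B" "0 < x" "x < y" "y \<le> pi/2"
  shows "rate Nt Npd FF Kpd n Pt w Rpd Gam N0 B y < rate Nt Npd FF Kpd n Pt w Rpd Gam N0 B x"
proof -
  have sx: "0 < sin (theta Nt x)" using sin_theta_pos assms by auto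
  have sxy: "sin (theta Nt x) < sin (theta Nt y)" using sin_theta_strict assms by auto
  have d2: "0 < D2 Npd FF Kpd B" unfolding D2_def using assms by simp
  have q: "n / sin (theta Nt y) < n / sin (theta Nt x)" "0 < n / sin (theta Nt y)"
    using sx sxy assms by (auto intro: divide_strict_left_mono)
  have D: "D1 Nt Npd FF Kpd n B y < D1 Nt Npd FF Kpd n B x" "0 < D1 Nt Npd FF Kpd n B y"
    unfolding D1_def by (rule mult_strict_left_mono[OF q(1) d2], rule mult_pos_pos[OF d2 q(2)])
  have D2: "(D1 Nt Npd FF Kpd n B y)^2 < (D1 Nt Npd FF Kpd n B x)^2"
    using D by (intro power_strict_mono) auto
  define uy where "uy = (D1 Nt Npd FF Kpd n B y)^2 / (2 * w^2)"
  define ux where "ux = (D1 Nt Npd FF Kpd n B x)^2 / (2 * w^2)"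
  have u: "uy < ux" "0 < uy" unfolding uy_def ux_def using D D2 assms
    by (auto intro: divide_strict_right_mono)
  have e: "exp (- ux) < exp (- uy)" "exp (- uy) < 1" using u by auto
  define py where "py = Pr Nt Npd FF Kpd n Pt w B y"
  define px where "px = Pr Nt Npd FF Kpd n Pt w B x"
  have py: "py = FF * Pt * (1 - exp (- uy))" unfolding py_def Pr_def uy_def by simp
  have px: "px = FF * Pt * (1 - exp (- ux))" unfolding px_def Pr_def ux_def by simp
  have p: "py < px" "0 < py" unfolding py px using e assms by auto
  have p2: "(Rpd * py)^2 < (Rpd * px)^2" using p assms by (intro power_strict_mono) auto
  have g: "0 < Gam * N0 * B" using assms by simp
  have f: "(Rpd * py)^2 / (Gam * N0 * B) < (Rpd * px)^2 / (Gam * N0 * B)"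
    using p2 g by (intro divide_strict_right_mono) auto
  have f0: "0 \<le> (Rpd * py)^2 / (Gam * N0 * B)" using g by simp
  have "log 2 (1 + (Rpd * py)^2 / (Gam * N0 * B)) < log 2 (1 + (Rpd * px)^2 / (Gam * N0 * B))"
    using f f0 by (subst log_less_cancel_iff) auto
  thus ?thesis unfolding rate_def py_def[symmetric] px_def[symmetric] using assms by simp
qed



lemma abstract:
  fixes R :: "real \<Rightarrow> real \<Rightarrow> real" and g :: "real \<Rightarrow> ereal" and c :: real
    and Feas :: "(real \<times> real) set" and S :: "real set"
  assumes feas: "\<And>B F. (B, F) \<in> Feas \<longleftrightarrow> (0 < B \<and> 0 < F \<and> F \<le> pi/2 \<and> g B \<le> ereal F)"
    and gc: "\<And>B. ereal c \<le> g B" and c: "0 < c"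
    and mono: "\<And>B x y. 0 < B \<Longrightarrow> 0 < x \<Longrightarrow> x < y \<Longrightarrow> y \<le> pi/2 \<Longrightarrow> R B y < R B x"
    and S: "S = {B. 0 < B \<and> g B \<le> ereal (pi / 2)}"
  shows "(SUP p \<in> Feas. ereal (R (fst p) (snd p))) = (SUP B \<in> S. ereal (R B (real_of_ereal (g B))))
    \<and> (\<forall>Bs FOVs. ((Bs, FOVs) \<in> Feas \<and> (\<forall>(B, FOV) \<in> Feas. R B FOV \<le> R Bs FOVs))
           \<longleftrightarrow> (Bs \<in> S \<and> ereal FOVs = g Bs
                \<and> (\<forall>B \<in> S. R B (real_of_ereal (g B)) \<le> R Bs (real_of_ereal (g Bs)))))"
proof -
  have gS: "g B = ereal (real_of_ereal (g B)) \<and> 0 < real_of_ereal (g B) \<and> real_of_ereal (g B) \<le> pi/2"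
    if "B \<in> S" for B
  proof -
    have "ereal c \<le> g B" "g B \<le> ereal (pi/2)" using gc that S by auto
    thus ?thesis using c by (cases "g B") auto
  qed
  have inF: "(B, real_of_ereal (g B)) \<in> Feas" if "B \<in> S" for B
    using gS[OF that] that S feas by auto
  have FtoS: "B \<in> S \<and> real_of_ereal (g B) \<le> F \<and> R B F \<le> R B (real_of_ereal (g B))"
    if "(B, F) \<in> Feas" for B F
  proof -
    have f: "0 < B" "0 < F" "F \<le> pi/2" "g B \<le> ereal F" using that feas by auto
    hence BS: "B \<in> S" using S by (metis (mono_tags, lifting) ereal_less_eq(3) mem_Collect_eq order_trans)
    have le: "real_of_ereal (g B) \<le> F" using gS[OF BS] f
      by (metis ereal_less_eq(3))
    have "R B F \<le> R B (real_of_ereal (g B))"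
    proof (cases "real_of_ereal (g B) < F")
      case True then show ?thesis using mono[of B "real_of_ereal (g B)" F] gS[OF BS] f by auto
    next
      case False then show ?thesis using le by simp
    qed
    thus ?thesis using BS le by blast
  qed
  have sup: "(SUP p \<in> Feas. ereal (R (fst p) (snd p))) = (SUP B \<in> S. ereal (R B (real_of_ereal (g B))))"
  proof (rule antisym)
    show "(SUP p \<in> Feas. ereal (R (fst p) (snd p))) \<le> (SUP B \<in> S. ereal (R B (real_of_ereal (g B))))"
    proof (rule SUP_mono)
      fix p assume "p \<in> Feas"
      then obtain B F where p: "p = (B, F)" "(B, F) \<in> Feas" by (cases p) auto
      show "\<exists>m\<in>S. ereal (R (fst p) (snd p)) \<le> ereal (R m (real_of_ereal (g m)))"
        using FtoS[OF p(2)] p(1) by auto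
    qed
    show "(SUP B \<in> S. ereal (R B (real_of_ereal (g B)))) \<le> (SUP p \<in> Feas. ereal (R (fst p) (snd p)))"
    proof (rule SUP_mono)
      fix B assume "B \<in> S"
      thus "\<exists>m\<in>Feas. ereal (R B (real_of_ereal (g B))) \<le> ereal (R (fst m) (snd m))"
        using inF by force
    qed
  qed
  have iff: "((Bs, FOVs) \<in> Feas \<and> (\<forall>(B, FOV) \<in> Feas. R B FOV \<le> R Bs FOVs))
           \<longleftrightarrow> (Bs \<in> S \<and> ereal FOVs = g Bs
                \<and> (\<forall>B \<in> S. R B (real_of_ereal (g B)) \<le> R Bs (real_of_ereal (g Bs))))" for Bs FOVs
  proof
    assume a: "(Bs, FOVs) \<in> Feas \<and> (\<forall>(B, FOV) \<in> Feas. R B FOV \<le> R Bs FOVs)"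
    hence f: "(Bs, FOVs) \<in> Feas" and mx: "\<And>B F. (B, F) \<in> Feas \<Longrightarrow> R B F \<le> R Bs FOVs" by auto
    from FtoS[OF f] have BS: "Bs \<in> S" and le: "real_of_ereal (g Bs) \<le> FOVs" by auto
    have eq: "real_of_ereal (g Bs) = FOVs"
    proof (rule ccontr)
      assume "real_of_ereal (g Bs) \<noteq> FOVs"
      hence "real_of_ereal (g Bs) < FOVs" using le by simp
      hence "R Bs FOVs < R Bs (real_of_ereal (g Bs))"
        using mono[of Bs "real_of_ereal (g Bs)" FOVs] gS[OF BS] f feas by auto
      moreover have "R Bs (real_of_ereal (g Bs)) \<le> R Bs FOVs" using mx[OF inF[OF BS]] .
      ultimately show False by simp
    qed
    have "ereal FOVs = g Bs" using gS[OF BS] eq by simp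
    moreover have "\<forall>B \<in> S. R B (real_of_ereal (g B)) \<le> R Bs (real_of_ereal (g Bs))"
      using mx inF eq by auto
    ultimately show "Bs \<in> S \<and> ereal FOVs = g Bs
                \<and> (\<forall>B \<in> S. R B (real_of_ereal (g B)) \<le> R Bs (real_of_ereal (g Bs)))" using BS by simp
  next
    assume a: "Bs \<in> S \<and> ereal FOVs = g Bs
                \<and> (\<forall>B \<in> S. R B (real_of_ereal (g B)) \<le> R Bs (real_of_ereal (g Bs)))"
    hence eq: "real_of_ereal (g Bs) = FOVs" by (metis real_of_ereal.simps(1))
    have f: "(Bs, FOVs) \<in> Feas" using inF[of Bs] a eq by simp
    have "R B F \<le> R Bs FOVs" if "(B, F) \<in> Feas" for B F
      using FtoS[OF that] a eq by force
    thus "(Bs, FOVs) \<in> Feas \<and> (\<forall>(B, FOV) \<in> Feas. R B FOV \<le> R Bs FOVs)" using f by auto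
  qed
  show ?thesis using sup iff by blast
qed


theorem theorem2:
  fixes Nt Npd :: nat and FF Kpd n Pt w Rpd Gam N0 FOVmin Lmax Amax :: real
    and R :: "real \<Rightarrow> real \<Rightarrow> real" and g :: "real \<Rightarrow> ereal"
    and Feas :: "(real \<times> real) set" and S :: "real set"
  assumes "Nt \<ge> 1" and "Npd \<ge> 1" and "0 < FF" and "FF \<le> 1" and "0 < Kpd" and "n \<ge> 1"
    and "0 < Pt" and "0 < w" and "0 < Rpd" and "0 < Gam" and "0 < N0"
    and "0 < FOVmin" and "FOVmin \<le> pi / 2" and "0 < Lmax" and "0 < Amax"
  defines "R \<equiv> rate Nt Npd FF Kpd n Pt w Rpd Gam N0"
    and "g \<equiv> fFOV Nt Npd FF Kpd n FOVmin Lmax Amax"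
    and "Feas \<equiv> {(B, FOV). 0 < B \<and> 0 < FOV \<and> FOV \<le> pi / 2 \<and> FOV \<ge> FOVmin
                   \<and> L_ADR Nt Npd FF Kpd n B FOV \<le> Lmax \<and> A_ADR Nt Npd FF Kpd n B FOV \<le> Amax}"
    and "S \<equiv> {B. 0 < B \<and> g B \<le> ereal (pi / 2)}"
  shows "(SUP p \<in> Feas. ereal (R (fst p) (snd p))) = (SUP B \<in> S. ereal (R B (real_of_ereal (g B))))
    \<and> (\<forall>Bs FOVs. ((Bs, FOVs) \<in> Feas \<and> (\<forall>(B, FOV) \<in> Feas. R B FOV \<le> R Bs FOVs))
           \<longleftrightarrow> (Bs \<in> S \<and> ereal FOVs = g Bs
                \<and> (\<forall>B \<in> S. R B (real_of_ereal (g B)) \<le> R Bs (real_of_ereal (g Bs)))))"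
  proof -
  have c: "0 < FOVmin" by fact
  have feas: "(B, F) \<in> Feas \<longleftrightarrow> (0 < B \<and> 0 < F \<and> F \<le> pi/2 \<and> g B \<le> ereal F)" for B F
  proof (cases "0 < B \<and> 0 < F \<and> F \<le> pi/2")
    case False then show ?thesis unfolding Feas_def by auto
  next
    case True
    have n0: "0 \<le> n" using assms by simp
    have i1: "gen_inv (fL Nt Npd FF Kpd n Lmax) B \<le> ereal F \<longleftrightarrow> fL Nt Npd FF Kpd n Lmax F \<le> B"
      using True by (intro gen_inv_le_iff fL_anti[OF assms(1,3,5) n0 assms(14)] fL_cont[OF assms(1)]) auto
    have i2: "gen_inv (fA Nt Npd FF Kpd n Amax) B \<le> ereal F \<longleftrightarrow> fA Nt Npd FF Kpd n Amax F \<le> B"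
      using True by (intro gen_inv_le_iff fA_anti[OF assms(1,3,5,15)] fA_cont[OF assms(1)]) auto
    have "g B \<le> ereal F \<longleftrightarrow> FOVmin \<le> F \<and> fL Nt Npd FF Kpd n Lmax F \<le> B \<and> fA Nt Npd FF Kpd n Amax F \<le> B"
      unfolding g_def fFOV_def using i1 i2 by simp
    moreover have "L_ADR Nt Npd FF Kpd n B F \<le> Lmax \<longleftrightarrow> fL Nt Npd FF Kpd n Lmax F \<le> B"
      using True assms by (intro L_iff) auto
    moreover have "A_ADR Nt Npd FF Kpd n B F \<le> Amax \<longleftrightarrow> fA Nt Npd FF Kpd n Amax F \<le> B"
      using True assms by (intro A_iff) auto
    ultimately show ?thesis unfolding Feas_def using True by auto
  qed
  have gc: "ereal FOVmin \<le> g B" for B unfolding g_def fFOV_def by simp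
  have mono: "R B y < R B x" if "0 < B" "0 < x" "x < y" "y \<le> pi/2" for B x y
    unfolding R_def using that assms by (intro rate_strict) auto
  show ?thesis by (rule abstract[OF feas gc c mono S_def[THEN meta_eq_to_obj_eq]])
qed

end
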